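(* Let $n\ge1$ and let $R$ be a plane tree with $n+1$ internal nodes and $n+1$ leaves in which every internal node has a leaf as its first (leftmost) child, equipped with an integer labeling $\ell$ of its leaves. Then $(R,\ell)$ is a decorated tree if and only if $\mathrm{Ctr}(R)$ is a sticky tree. Consequently $\mathrm{Ctr}$ is a bijection from $\mathcal{RS}_n$ to $\mathcal{S}_n$.
   Context: Plane trees: a plane tree is a rooted tree in which the children of every node are linearly ordered (left to right); the root has depth $0$, a child of a node of depth $d$ has depth $d+1$; a leaf is a node without children, an internal node is a node with at least one child. The prefix order is: the root, followed by the prefix order of the subtree of its leftmost child, then of its second child, and so on. $R_u$ (or $S_u$) denotes the subtree rooted at $u$. Sticky trees: a sticky tree is a plane tree $S$ with node set $V$ and a labeling $\ell:V\to\mathbb{N}$ such that: (1) every node $u$ of depth $d$ has $0\le\ell(u)\le d$; (2) every node $u$ of depth $d>0$ has some $v\in S_u$ (possibly $v=u$) with $\ell(v)<d$; (3) for every node $u$ of depth $d$, if some $v\in S_u$ has $\ell(v)=d$, then every node of $S_u$ (including $u$) preceding $v$ in prefix order has label at least $d$. $\mathcal{S}_n$ is the set of sticky trees with $n$ edges. Decorated trees: a decorated tree is a plane tree $R$ with an integer labeling $\ell$ defined only on its leaves such that: (1') for every leaf $f$ whose parent has depth $d$, $-1\le\ell(f)\le d-1$; (2') every internal node $u$ of depth $d>0$ has a descendant leaf $f$ with $\ell(f)<d-1$; (3') for every node $t$ of depth $d$ and every child $u$ of $t$, if some leaf $f$ of $R_u$ has $\ell(f)=d$, then every leaf of $R_u$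 preceding $f$ in prefix order has label at least $d$. $\mathcal{RS}_n$ is the set of decorated trees with $n+1$ internal nodes and $n+1$ leaves in which every internal node has a leaf as its first child. The map $\mathrm{Ctr}$: for $R$ as in the claim (so each leaf is the first child of its parent and leaves are in bijection with internal nodes), $\mathrm{Ctr}(R)$ is the plane tree obtained by deleting all leaves of $R$, where each remaining (formerly internal) node $w$ receives the label $\ell(f)+1$, $f$ being the leaf that was the first child of $w$. *)

theory Defs
  imports Main
begin

text \<open>Plane trees (unlabelled); nodes are addressed by paths of child indices
  (0-based), the root being the empty path. The depth of a node is the length of its path.\<close>
datatype ptree = N "ptree list"

inductive is_node :: "ptree \<Rightarrow> nat list \<Rightarrow> bool" where
  root: "is_node t []"
| child: "i < length cs \<Longrightarrow> is_node (cs ! i) p \<Longrightarrow> is_node (N cs) (i # p)"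

definition nodes :: "ptree \<Rightarrow> nat list set" where
  "nodes t = {p. is_node t p}"

definition is_leaf :: "ptree \<Rightarrow> nat list \<Rightarrow> bool" where
  "is_leaf t p \<longleftrightarrow> is_node t p \<and> \<not> is_node t (p @ [0])"

definition is_internal :: "ptree \<Rightarrow> nat list \<Rightarrow> bool" where
  "is_internal t p \<longleftrightarrow> is_node t p \<and> is_node t (p @ [0])"

definition num_edges :: "ptree \<Rightarrow> nat" where
  "num_edges t = card (nodes t) - 1"

definition subtree :: "ptree \<Rightarrow> nat list \<Rightarrow> nat list set" where
  "subtree t u = {v. is_node t v \<and> (\<exists>w. v = u @ w)}"

text \<open>Prefix (preorder) order: strict lexicographic order on addresses, proper prefixes first.\<close>
definition precedes :: "nat list \<Rightarrow> nat list \<Rightarrow> bool" where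
  "precedes v w \<longleftrightarrow> (v, w) \<in> lexord {(a, b). a < b}"

text \<open>Sticky trees: labels are integers, condition (1) forces them into \<nat>.\<close>
definition sticky :: "ptree \<Rightarrow> (nat list \<Rightarrow> int) \<Rightarrow> bool" where
  "sticky S l \<longleftrightarrow>
     (\<forall>u. is_node S u \<longrightarrow> 0 \<le> l u \<and> l u \<le> int (length u)) \<and>
     (\<forall>u. is_node S u \<and> length u > 0 \<longrightarrow> (\<exists>v\<in>subtree S u. l v < int (length u))) \<and>
     (\<forall>u. is_node S u \<longrightarrow> (\<forall>v\<in>subtree S u. l v = int (length u) \<longrightarrow>
         (\<forall>w\<in>subtree S u. precedes w v \<longrightarrow> l w \<ge> int (length u))))"

text \<open>Decorated trees: only the values of l on leaves matter.\<close>
definition decorated :: "ptree \<Rightarrow> (nat list \<Rightarrow> int) \<Rightarrow> bool" where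
  "decorated R l \<longleftrightarrow>
     (\<forall>f. is_leaf R f \<and> f \<noteq> [] \<longrightarrow> -1 \<le> l f \<and> l f \<le> int (length f - 1) - 1) \<and>
     (\<forall>u. is_internal R u \<and> length u > 0 \<longrightarrow>
         (\<exists>f\<in>subtree R u. is_leaf R f \<and> l f < int (length u) - 1)) \<and>
     (\<forall>t i. is_node R (t @ [i]) \<longrightarrow>
         (\<forall>f\<in>subtree R (t @ [i]). is_leaf R f \<and> l f = int (length t) \<longrightarrow>
            (\<forall>g\<in>subtree R (t @ [i]). is_leaf R g \<and> precedes g f \<longrightarrow> l g \<ge> int (length t))))"

definition first_child_leaf :: "ptree \<Rightarrow> bool" where
  "first_child_leaf R \<longleftrightarrow> (\<forall>u. is_internal R u \<longrightarrow> is_leaf R (u @ [0]))"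

text \<open>Ctr on the tree shape: delete the (first-child) leaves.\<close>
fun ctr :: "ptree \<Rightarrow> ptree" where
  "ctr (N []) = N []"
| "ctr (N (c # cs)) = N (map ctr cs)"

text \<open>Ctr on labels: node p of Ctr(R) is the internal node map Suc p of R, whose
  first child is the leaf map Suc p @ [0]; labels outside the nodes are normalised to 0.\<close>
definition ctr_lab :: "ptree \<Rightarrow> (nat list \<Rightarrow> int) \<Rightarrow> nat list \<Rightarrow> int" where
  "ctr_lab R l p = (if is_node (ctr R) p then l (map Suc p @ [0]) + 1 else 0)"

text \<open>The sets RS_n and S_n; labelings are normalised to 0 outside their domain
  (leaves, resp. nodes) so that a labelled tree is a pair (tree, function).\<close>
definition RS :: "nat \<Rightarrow> (ptree \<times> (nat list \<Rightarrow> int)) set" where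
  "RS n = {(R, l). card {u. is_internal R u} = n + 1 \<and> card {f. is_leaf R f} = n + 1 \<and>
            first_child_leaf R \<and> decorated R l \<and> (\<forall>p. \<not> is_leaf R p \<longrightarrow> l p = 0)}"

definition SS :: "nat \<Rightarrow> (ptree \<times> (nat list \<Rightarrow> int)) set" where
  "SS n = {(S, l). num_edges S = n \<and> sticky S l \<and> (\<forall>p. \<not> is_node S p \<longrightarrow> l p = 0)}"

end

theory Submission
  imports Defs
begin


lemma node_Cons_iff: "is_node (N cs) (i # p) \<longleftrightarrow> i < length cs \<and> is_node (cs ! i) p"
  by (auto elim: is_node.cases intro: is_node.intros)

lemma node_root[simp]: "is_node t []" by (rule is_node.root)

lemma node_prefix: "is_node t (p @ q) \<Longrightarrow> is_node t p"
proof (induction p arbitrary: t)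
  case Nil then show ?case by simp
next
  case (Cons a p)
  obtain cs where t: "t = N cs" by (cases t)
  show ?case using Cons.prems Cons.IH unfolding t by (auto simp: node_Cons_iff)
qed

lemma node_zero: "is_node t (p @ [i]) \<Longrightarrow> is_node t (p @ [0])"
proof (induction p arbitrary: t)
  case Nil then show ?case by (cases t) (auto simp: node_Cons_iff)
next
  case (Cons a p)
  obtain cs where t: "t = N cs" by (cases t)
  show ?case using Cons.prems Cons.IH unfolding t by (auto simp: node_Cons_iff)
qed

lemma ctr_node: "is_node (ctr t) p \<longleftrightarrow> is_node t (map Suc p)"
proof (induction p arbitrary: t)
  case Nil then show ?case by simp
next
  case (Cons a p)
  obtain cs where t: "t = N cs" by (cases t)
  show ?case
  proof (cases cs)
    case Nil then show ?thesis using t by (simp add: node_Cons_iff)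
  next
    case (Cons c cs') then show ?thesis using t Cons.IH by (auto simp: node_Cons_iff)
  qed
qed

lemma zero_map_Suc: "0 \<in> set xs \<Longrightarrow> xs \<noteq> map Suc p" by auto

lemma psi_phi_ne: "map Suc a @ [0] \<noteq> map Suc b"
proof
  assume "map Suc a @ [0] = map Suc b"
  then have "0 \<in> set (map Suc b)" by (metis in_set_conv_decomp)
  then show False by auto
qed

lemma psi_prefix: "map Suc q @ [0] = map Suc p @ w \<Longrightarrow> \<exists>w'. q = p @ w'"
proof (induction p arbitrary: q)
  case Nil then show ?case by simp
next
  case (Cons a p) then show ?case by (cases q) auto
qed

lemma phi_prefix: "map Suc q = map Suc p @ w \<Longrightarrow> \<exists>w'. q = p @ w'"
proof (induction p arbitrary: q)
  case Nil then show ?case by simp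
next
  case (Cons a p) then show ?case by (cases q) auto
qed

lemma psi_psi_prefix: "map Suc q @ [0] = map Suc p @ [0] @ w \<Longrightarrow> w = [] \<and> q = p"
proof -
  assume h: "map Suc q @ [0] = map Suc p @ [0] @ w"
  then obtain w' where q: "q = p @ w'" using psi_prefix by (metis append_assoc)
  with h have "map Suc w' @ [0] = 0 # w" by simp
  then show ?thesis using q by (cases w') auto
qed

lemma prec_psi: "precedes (map Suc a @ [0]) (map Suc b @ [0]) \<longleftrightarrow> precedes a b"
  unfolding precedes_def
proof (induction a arbitrary: b)
  case Nil then show ?case by (cases b) auto
next
  case (Cons x a) then show ?case by (cases b) auto
qed

definition good :: "ptree \<Rightarrow> bool" where
  "good R \<longleftrightarrow> first_child_leaf R \<and> (\<forall>f. is_leaf R f \<longrightarrow> (\<exists>u. f = u @ [0]))"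

lemma phi_node: "good R \<Longrightarrow> is_node (ctr R) p \<Longrightarrow> is_internal R (map Suc p)"
proof -
  assume g: "good R" and p: "is_node (ctr R) p"
  have n: "is_node R (map Suc p)" using p ctr_node by blast
  have "\<not> is_leaf R (map Suc p)"
  proof
    assume "is_leaf R (map Suc p)"
    then obtain u where "map Suc p = u @ [0]" using g unfolding good_def by blast
    then have "0 \<in> set (map Suc p)" by simp
    then show False by auto
  qed
  then show ?thesis using n unfolding is_leaf_def is_internal_def by blast
qed

lemma good_nodes: assumes g: "good R"
  shows "is_node R q \<longleftrightarrow> (\<exists>p. is_node (ctr R) p \<and> (q = map Suc p \<or> q = map Suc p @ [0]))"
proof
  assume q: "is_node R q"
  show "\<exists>p. is_node (ctr R) p \<and> (q = map Suc p \<or> q = map Suc p @ [0])"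
  proof (cases "0 \<in> set q")
    case False
    define p' where "p' = map (\<lambda>x. x - 1) q"
    have eq: "q = map Suc p'" unfolding p'_def using False by (induction q) auto
    have "is_node (ctr R) p'" using q eq ctr_node by simp
    then show ?thesis using eq by blast
  next
    case True
    then obtain a b where ab: "q = a @ 0 # b" "0 \<notin> set a" by (metis split_list_first)
    define p' where "p' = map (\<lambda>x. x - 1) a"
    have a_eq: "a = map Suc p'" unfolding p'_def using ab(2) by (induction a) auto
    have n0: "is_node R (a @ [0])" using q ab node_prefix[of R "a @ [0]" b] by simp
    then have "is_internal R a" using node_prefix is_internal_def by blast
    then have lf: "is_leaf R (a @ [0])" using g unfolding good_def first_child_leaf_def by blast
    have "b = []"
    proof (rule ccontr)
      assume "b \<noteq> []"
      then obtain j b' where "b = j # b'" by (cases b) auto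
      then have "is_node R ((a @ [0]) @ [j])" using q ab node_prefix[of R "(a @ [0]) @ [j]" b'] by simp
      then have "is_node R ((a @ [0]) @ [0])" by (rule node_zero)
      then show False using lf is_leaf_def by blast
    qed
    moreover have "is_node (ctr R) p'"
      using n0 node_prefix[of R a "[0]"] ctr_node a_eq by simp
    ultimately show ?thesis using ab a_eq by blast
  qed
next
  assume "\<exists>p. is_node (ctr R) p \<and> (q = map Suc p \<or> q = map Suc p @ [0])"
  then show "is_node R q" using phi_node[OF g] is_internal_def by blast
qed

lemma psi_psi_ne: "map Suc a @ [0] \<noteq> map Suc b @ [0, 0]"
proof
  assume "map Suc a @ [0] = map Suc b @ [0, 0]"
  then have "map Suc a = map Suc b @ [0]" by simp
  then have "0 \<in> set (map Suc a)" by simp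
  then show False by auto
qed

lemma good_leaf: assumes g: "good R"
  shows "is_leaf R q \<longleftrightarrow> (\<exists>p. is_node (ctr R) p \<and> q = map Suc p @ [0])"
proof
  assume "is_leaf R q"
  then show "\<exists>p. is_node (ctr R) p \<and> q = map Suc p @ [0]"
  proof -
    assume lf: "is_leaf R q"
    then obtain p where p: "is_node (ctr R) p" "q = map Suc p \<or> q = map Suc p @ [0]"
      using good_nodes[OF g, of q] unfolding is_leaf_def by blast
    have "q \<noteq> map Suc p" using phi_node[OF g p(1)] lf unfolding is_leaf_def is_internal_def by blast
    then show ?thesis using p by blast
  qed
next
  assume "\<exists>p. is_node (ctr R) p \<and> q = map Suc p @ [0]"
  then obtain p where p: "is_node (ctr R) p" "q = map Suc p @ [0]" by blast
  have "\<not> is_node R (q @ [0])"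
  proof
    assume "is_node R (q @ [0])"
    then obtain p' where "q @ [0] = map Suc p' \<or> q @ [0] = map Suc p' @ [0]"
      using good_nodes[OF g] by blast
    moreover have "q @ [0] \<noteq> map Suc p'" using p(2) by (intro zero_map_Suc) simp
    moreover have "q @ [0] \<noteq> map Suc p' @ [0]" using p(2) zero_map_Suc[of q p'] by simp
    ultimately show False by blast
  qed
  then show "is_leaf R q" using p good_nodes[OF g] is_leaf_def by blast
qed

lemma good_internal: assumes g: "good R"
  shows "is_internal R q \<longleftrightarrow> (\<exists>p. is_node (ctr R) p \<and> q = map Suc p)"
proof
  assume h: "is_internal R q"
  then obtain p where p: "is_node (ctr R) p" "q = map Suc p \<or> q = map Suc p @ [0]"
    using good_nodes[OF g] is_internal_def by blast
  have "\<not> is_leaf R q" using h is_internal_def is_leaf_def by blast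
  then show "\<exists>p. is_node (ctr R) p \<and> q = map Suc p" using p good_leaf[OF g] by blast
next
  assume "\<exists>p. is_node (ctr R) p \<and> q = map Suc p"
  then show "is_internal R q" using phi_node[OF g] by blast
qed

lemma finite_nodes: "finite {p. is_node t p}"
proof (induction t)
  case (N cs)
  have "{p. is_node (N cs) p} \<subseteq> {[]} \<union> (\<Union>i<length cs. (Cons i) ` {p. is_node (cs!i) p})"
  proof
    fix p assume "p \<in> {p. is_node (N cs) p}"
    then show "p \<in> {[]} \<union> (\<Union>i<length cs. (Cons i) ` {p. is_node (cs!i) p})"
      by (cases p) (auto simp: node_Cons_iff)
  qed
  moreover have "finite ({[]} \<union> (\<Union>i<length cs. (Cons i) ` {p. is_node (cs!i) p}))"
    using N by auto
  ultimately show ?case by (rule finite_subset)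
qed

lemma tree_ext: "(\<And>p. is_node t1 p \<longleftrightarrow> is_node t2 p) \<Longrightarrow> t1 = t2"
proof (induction t1 arbitrary: t2)
  case (N cs)
  obtain ds where t2: "t2 = N ds" by (cases t2)
  have len: "length cs = length ds"
  proof -
    have "\<And>i. i < length cs \<longleftrightarrow> i < length ds"
      using N.prems[of "[_]"] unfolding t2 by (simp add: node_Cons_iff)
    then show ?thesis by (meson linorder_neqE_nat less_irrefl)
  qed
  have "\<And>i. i < length cs \<Longrightarrow> cs ! i = ds ! i"
  proof -
    fix i assume i: "i < length cs"
    show "cs ! i = ds ! i"
      using N.IH[OF nth_mem[OF i]] N.prems[of "i # _"] i len unfolding t2 by (simp add: node_Cons_iff)
  qed
  then show ?case using len t2 by (simp add: nth_equalityI)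
qed

fun ex :: "ptree \<Rightarrow> ptree" where
  "ex (N cs) = N (N [] # map ex cs)"

lemma ctr_ex: "ctr (ex t) = t"
  by (induction t) (simp add: map_idI)

lemma ex_nodes: "is_node (ex t) q \<longleftrightarrow> (\<exists>p. is_node t p \<and> (q = map Suc p \<or> q = map Suc p @ [0]))"
proof (induction q arbitrary: t)
  case Nil then show ?case by (auto intro: exI[of _ "[]"])
next
  case (Cons a r)
  obtain cs where t: "t = N cs" by (cases t)
  show ?case
  proof (cases a)
    case 0
    have l: "is_node (N []) r \<longleftrightarrow> r = []" by (cases r) (auto simp: node_Cons_iff)
    have r1: "0 # r = map Suc p \<longleftrightarrow> False" for p by (cases p) auto
    have r2: "0 # r = map Suc p @ [0] \<longleftrightarrow> p = [] \<and> r = []" for p by (cases p) auto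
    show ?thesis unfolding t 0 using l r1 r2
      by (auto simp: node_Cons_iff)
  next
    case (Suc i)
    have "is_node (ex t) (a # r) \<longleftrightarrow> i < length cs \<and> (\<exists>p. is_node (cs ! i) p \<and> (r = map Suc p \<or> r = map Suc p @ [0]))"
      unfolding t Suc using Cons.IH by (auto simp: node_Cons_iff)
    also have "\<dots> \<longleftrightarrow> (\<exists>p. is_node t p \<and> (a # r = map Suc p \<or> a # r = map Suc p @ [0]))"
    proof
      assume "i < length cs \<and> (\<exists>p. is_node (cs ! i) p \<and> (r = map Suc p \<or> r = map Suc p @ [0]))"
      then obtain p where "i < length cs" "is_node (cs ! i) p" "r = map Suc p \<or> r = map Suc p @ [0]" by blast
      then show "\<exists>p. is_node t p \<and> (a # r = map Suc p \<or> a # r = map Suc p @ [0])"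
        unfolding t Suc by (intro exI[of _ "i # p"]) (auto simp: node_Cons_iff)
    next
      assume "\<exists>p. is_node t p \<and> (a # r = map Suc p \<or> a # r = map Suc p @ [0])"
      then obtain p where p: "is_node t p" "a # r = map Suc p \<or> a # r = map Suc p @ [0]" by auto
      then obtain p' where "p = i # p'" unfolding Suc by (cases p) auto
      then show "i < length cs \<and> (\<exists>p. is_node (cs ! i) p \<and> (r = map Suc p \<or> r = map Suc p @ [0]))"
        using p unfolding t Suc by (auto simp: node_Cons_iff)
    qed
    finally show ?thesis .
  qed
qed


lemma good_ex: "good (ex t)"
proof -
  have nodes: "is_node (ex t) q \<longleftrightarrow> (\<exists>p. is_node t p \<and> (q = map Suc p \<or> q = map Suc p @ [0]))" for q
    by (rule ex_nodes)
  have A: "is_leaf (ex t) (map Suc p @ [0])" if "is_node t p" for p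
  proof -
    have "\<not> is_node (ex t) (map Suc p @ [0] @ [0])"
    proof
      assume "is_node (ex t) (map Suc p @ [0] @ [0])"
      then obtain p' where "map Suc p @ [0] @ [0] = map Suc p' \<or> map Suc p @ [0] @ [0] = map Suc p' @ [0]"
        using nodes by blast
      moreover have "map Suc p @ [0] @ [0] \<noteq> map Suc p'" by (rule zero_map_Suc) simp
      moreover have "map Suc p @ [0] \<noteq> map Suc p'" by (rule zero_map_Suc) simp
      ultimately show False by simp
    qed
    then show ?thesis using that nodes unfolding is_leaf_def by auto
  qed
  have FCL: "first_child_leaf (ex t)"
    unfolding first_child_leaf_def
  proof (intro allI impI)
    fix u assume "is_internal (ex t) u"
    then obtain p where p: "is_node t p" "u @ [0] = map Suc p \<or> u @ [0] = map Suc p @ [0]"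
      using nodes unfolding is_internal_def by blast
    have "u @ [0] \<noteq> map Suc p" by (rule zero_map_Suc) simp
    then have "u = map Suc p" using p by simp
    then show "is_leaf (ex t) (u @ [0])" using A p by simp
  qed
  have LF: "\<exists>u. f = u @ [0]" if f: "is_leaf (ex t) f" for f
  proof -
    obtain p where p: "is_node t p" "f = map Suc p \<or> f = map Suc p @ [0]"
      using f nodes unfolding is_leaf_def by blast
    have "f \<noteq> map Suc p"
    proof
      assume "f = map Suc p"
      then have "is_node (ex t) (f @ [0])" using nodes p by blast
      then show False using f is_leaf_def by blast
    qed
    then show ?thesis using p by blast
  qed
  show ?thesis using FCL LF good_def by blast
qed



lemma sub_leaf:
  assumes g: "good R" and p: "is_node (ctr R) p"
  shows "(f \<in> subtree R (map Suc p) \<and> is_leaf R f) \<longleftrightarrow>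
         (\<exists>v. v \<in> subtree (ctr R) p \<and> f = map Suc v @ [0])"
proof
  assume h: "f \<in> subtree R (map Suc p) \<and> is_leaf R f"
  then obtain v where v: "is_node (ctr R) v" "f = map Suc v @ [0]" using good_leaf[OF g] by blast
  obtain w where "f = map Suc p @ w" using h unfolding subtree_def by blast
  then obtain w' where "v = p @ w'" using psi_prefix v(2) by metis
  then show "\<exists>v. v \<in> subtree (ctr R) p \<and> f = map Suc v @ [0]"
    using v unfolding subtree_def by blast
next
  assume "\<exists>v. v \<in> subtree (ctr R) p \<and> f = map Suc v @ [0]"
  then obtain v w' where v: "is_node (ctr R) v" "v = p @ w'" "f = map Suc v @ [0]"
    unfolding subtree_def by blast
  have "is_leaf R f" using v good_leaf[OF g] by blast
  moreover have "f = map Suc p @ (map Suc w' @ [0])" using v by simp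
  ultimately show "f \<in> subtree R (map Suc p) \<and> is_leaf R f"
    unfolding subtree_def is_leaf_def by blast
qed

lemma subtree_node: "v \<in> subtree t p \<Longrightarrow> is_node t v"
  unfolding subtree_def by blast

lemma main_equiv:
  assumes g: "good R"
  shows "decorated R l \<longleftrightarrow> sticky (ctr R) (ctr_lab R l)"
proof -
  define S where "S = ctr R"
  define L where "L = ctr_lab R l"
  have Lp: "is_node S p \<Longrightarrow> L p = l (map Suc p @ [0]) + 1" for p
    unfolding L_def ctr_lab_def S_def by simp
  have leaf: "is_leaf R q \<longleftrightarrow> (\<exists>p. is_node S p \<and> q = map Suc p @ [0])" for q
    unfolding S_def by (rule good_leaf[OF g])
  have internal: "is_internal R q \<longleftrightarrow> (\<exists>p. is_node S p \<and> q = map Suc p)" for q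
    unfolding S_def by (rule good_internal[OF g])
  have sl: "is_node S p \<Longrightarrow> (f \<in> subtree R (map Suc p) \<and> is_leaf R f) \<longleftrightarrow>
         (\<exists>v. v \<in> subtree S p \<and> f = map Suc v @ [0])" for p f
    unfolding S_def by (rule sub_leaf[OF g])
  have nodes: "is_node R q \<longleftrightarrow> (\<exists>p. is_node S p \<and> (q = map Suc p \<or> q = map Suc p @ [0]))" for q
    unfolding S_def by (rule good_nodes[OF g])
  have D1S1: "(\<forall>f. is_leaf R f \<and> f \<noteq> [] \<longrightarrow> -1 \<le> l f \<and> l f \<le> int (length f - 1) - 1)
     \<longleftrightarrow> (\<forall>u. is_node S u \<longrightarrow> 0 \<le> L u \<and> L u \<le> int (length u))"
  proof
    assume D1: "\<forall>f. is_leaf R f \<and> f \<noteq> [] \<longrightarrow> -1 \<le> l f \<and> l f \<le> int (length f - 1) - 1"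
    show "\<forall>u. is_node S u \<longrightarrow> 0 \<le> L u \<and> L u \<le> int (length u)"
    proof (intro allI impI)
      fix u assume u: "is_node S u"
      have "is_leaf R (map Suc u @ [0])" using u leaf by blast
      then have "-1 \<le> l (map Suc u @ [0]) \<and> l (map Suc u @ [0]) \<le> int (length u) - 1"
        using D1 by fastforce
      then show "0 \<le> L u \<and> L u \<le> int (length u)" using Lp[OF u] by simp
    qed
  next
    assume S1: "\<forall>u. is_node S u \<longrightarrow> 0 \<le> L u \<and> L u \<le> int (length u)"
    show "\<forall>f. is_leaf R f \<and> f \<noteq> [] \<longrightarrow> -1 \<le> l f \<and> l f \<le> int (length f - 1) - 1"
    proof (intro allI impI)
      fix f assume "is_leaf R f \<and> f \<noteq> []"
      then obtain p where p: "is_node S p" "f = map Suc p @ [0]" using leaf by blast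
      then show "-1 \<le> l f \<and> l f \<le> int (length f - 1) - 1" using S1 Lp[OF p(1)] by fastforce
    qed
  qed
  have D2S2: "(\<forall>u. is_internal R u \<and> length u > 0 \<longrightarrow>
         (\<exists>f\<in>subtree R u. is_leaf R f \<and> l f < int (length u) - 1))
     \<longleftrightarrow> (\<forall>u. is_node S u \<and> length u > 0 \<longrightarrow> (\<exists>v\<in>subtree S u. L v < int (length u)))"
  proof
    assume D2: "\<forall>u. is_internal R u \<and> length u > 0 \<longrightarrow>
         (\<exists>f\<in>subtree R u. is_leaf R f \<and> l f < int (length u) - 1)"
    show "\<forall>u. is_node S u \<and> length u > 0 \<longrightarrow> (\<exists>v\<in>subtree S u. L v < int (length u))"
    proof (intro allI impI)
      fix u assume u: "is_node S u \<and> length u > 0"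
      have "is_internal R (map Suc u)" using u internal by blast
      then obtain f where f: "f \<in> subtree R (map Suc u)" "is_leaf R f" "l f < int (length u) - 1"
        using D2 u by fastforce
      then obtain v where v: "v \<in> subtree S u" "f = map Suc v @ [0]" using sl u by blast
      then show "\<exists>v\<in>subtree S u. L v < int (length u)"
        using Lp[OF subtree_node[OF v(1)]] f(3) by (intro bexI[of _ v]) auto
    qed
  next
    assume S2: "\<forall>u. is_node S u \<and> length u > 0 \<longrightarrow> (\<exists>v\<in>subtree S u. L v < int (length u))"
    show "\<forall>u. is_internal R u \<and> length u > 0 \<longrightarrow>
         (\<exists>f\<in>subtree R u. is_leaf R f \<and> l f < int (length u) - 1)"
    proof (intro allI impI)
      fix u assume u: "is_internal R u \<and> length u > 0"
      then obtain p where p: "is_node S p" "u = map Suc p" using internal by blast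
      then obtain v where v: "v \<in> subtree S p" "L v < int (length p)" using S2 u by auto
      have "map Suc v @ [0] \<in> subtree R u \<and> is_leaf R (map Suc v @ [0])"
        using sl[OF p(1)] v p(2) by blast
      then show "\<exists>f\<in>subtree R u. is_leaf R f \<and> l f < int (length u) - 1"
        using Lp[OF subtree_node[OF v(1)]] v(2) p(2) by (intro bexI[of _ "map Suc v @ [0]"]) auto
    qed
  qed
  define D3 where "D3 = (\<forall>t i. is_node R (t @ [i]) \<longrightarrow>
         (\<forall>f\<in>subtree R (t @ [i]). is_leaf R f \<and> l f = int (length t) \<longrightarrow>
            (\<forall>g\<in>subtree R (t @ [i]). is_leaf R g \<and> precedes g f \<longrightarrow> l g \<ge> int (length t))))"
  define S3 where "S3 = (\<forall>u. is_node S u \<longrightarrow> (\<forall>v\<in>subtree S u. L v = int (length u) \<longrightarrow>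
         (\<forall>w\<in>subtree S u. precedes w v \<longrightarrow> L w \<ge> int (length u))))"
  have D3S3: "D3 \<longleftrightarrow> S3" if S1: "\<forall>u. is_node S u \<longrightarrow> 0 \<le> L u \<and> L u \<le> int (length u)"
  proof
    assume D3: D3
    show S3 unfolding S3_def
    proof (intro allI impI ballI)
      fix u v w assume u: "is_node S u" and v: "v \<in> subtree S u" and Lv: "L v = int (length u)"
        and w: "w \<in> subtree S u" and pr: "precedes w v"
      show "L w \<ge> int (length u)"
      proof (cases u rule: rev_exhaust)
        case Nil then show ?thesis using S1 subtree_node[OF w] by simp
      next
        case (snoc u0 j)
        let ?t = "map Suc u0"
        have tu: "?t @ [Suc j] = map Suc u" using snoc by simp
        have nR: "is_node R (?t @ [Suc j])" using tu u nodes by blast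
        have f: "map Suc v @ [0] \<in> subtree R (?t @ [Suc j]) \<and> is_leaf R (map Suc v @ [0])"
          using sl[OF u] v tu by metis
        have g: "map Suc w @ [0] \<in> subtree R (?t @ [Suc j]) \<and> is_leaf R (map Suc w @ [0])"
          using sl[OF u] w tu by metis
        have lt: "int (length ?t) = int (length u) - 1" using snoc by simp
        have lf: "l (map Suc v @ [0]) = int (length ?t)"
          using Lp[OF subtree_node[OF v]] Lv lt by simp
        have "l (map Suc w @ [0]) \<ge> int (length ?t)"
          using D3 nR f g lf pr prec_psi unfolding D3_def by blast
        then show ?thesis using Lp[OF subtree_node[OF w]] lt by simp
      qed
    qed
  next
    assume S3: S3
    show D3 unfolding D3_def
    proof (intro allI impI ballI)
      fix t i f g assume nR: "is_node R (t @ [i])" and f: "f \<in> subtree R (t @ [i])"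
        and fl: "is_leaf R f \<and> l f = int (length t)" and g: "g \<in> subtree R (t @ [i])"
        and gl: "is_leaf R g \<and> precedes g f"
      obtain p where p: "is_node S p" "t @ [i] = map Suc p \<or> t @ [i] = map Suc p @ [0]"
        using nR nodes by blast
      show "l g \<ge> int (length t)"
      proof (cases "t @ [i] = map Suc p")
        case False
        then have tp: "t @ [i] = map Suc p @ [0]" using p by blast
        then have tt: "t = map Suc p" by simp
        obtain q where q: "is_node S q" "f = map Suc q @ [0]" using fl leaf by blast
        obtain w where "f = (t @ [i]) @ w" using f unfolding subtree_def by blast
        then have "map Suc q @ [0] = map Suc p @ [0] @ w" using q tp by simp
        then have "q = p" using psi_psi_prefix by blast
        then have "L p = int (length p) + 1" using fl q Lp[OF p(1)] tt by simp
        then show ?thesis using S1 p(1) by fastforce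
      next
        case True
        have len: "int (length t) = int (length p) - 1"
          using arg_cong[OF True, of length] by simp
        obtain v where v: "v \<in> subtree S p" "f = map Suc v @ [0]" using sl[OF p(1)] f fl True by metis
        obtain w where w: "w \<in> subtree S p" "g = map Suc w @ [0]" using sl[OF p(1)] g gl True by metis
        have "L v = int (length p)" using Lp[OF subtree_node[OF v(1)]] v(2) fl len by simp
        moreover have "precedes w v" using gl v w prec_psi by simp
        ultimately have "L w \<ge> int (length p)" using S3 p(1) v(1) w(1) unfolding S3_def by blast
        then show ?thesis using Lp[OF subtree_node[OF w(1)]] w(2) len by simp
      qed
    qed
  qed
  have dec: "decorated R l \<longleftrightarrow>
      (\<forall>f. is_leaf R f \<and> f \<noteq> [] \<longrightarrow> -1 \<le> l f \<and> l f \<le> int (length f - 1) - 1) \<and>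
     (\<forall>u. is_internal R u \<and> length u > 0 \<longrightarrow>
         (\<exists>f\<in>subtree R u. is_leaf R f \<and> l f < int (length u) - 1)) \<and> D3"
    unfolding decorated_def D3_def by blast
  have sti: "sticky S L \<longleftrightarrow> (\<forall>u. is_node S u \<longrightarrow> 0 \<le> L u \<and> L u \<le> int (length u)) \<and>
     (\<forall>u. is_node S u \<and> length u > 0 \<longrightarrow> (\<exists>v\<in>subtree S u. L v < int (length u))) \<and> S3"
    unfolding sticky_def S3_def by blast
  show ?thesis unfolding S_def[symmetric] L_def[symmetric] dec sti D1S1 D2S2
    using D3S3 by blast
qed

lemma good_of_card:
  assumes c: "card {u. is_internal R u} = Suc n" "card {f. is_leaf R f} = Suc n"
    and fcl: "first_child_leaf R"
  shows "good R"
proof -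
  let ?I = "{u. is_internal R u}" and ?F = "{f. is_leaf R f}"
  have fF: "finite ?F" using c(2) card.infinite by fastforce
  have sub: "(\<lambda>u. u @ [0]) ` ?I \<subseteq> ?F" using fcl unfolding first_child_leaf_def by blast
  have inj: "inj_on (\<lambda>u. u @ [0]) ?I" by (rule inj_onI) simp
  have "card ((\<lambda>u. u @ [0]) ` ?I) = card ?F" using card_image[OF inj] c by simp
  then have "(\<lambda>u. u @ [0]) ` ?I = ?F" using card_subset_eq[OF fF sub] by blast
  then show ?thesis unfolding good_def using fcl by blast
qed

lemma card_good:
  assumes g: "good R"
  shows "card {u. is_internal R u} = card {p. is_node (ctr R) p}"
    "card {f. is_leaf R f} = card {p. is_node (ctr R) p}"
proof -
  have "{u. is_internal R u} = map Suc ` {p. is_node (ctr R) p}" using good_internal[OF g] by blast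
  moreover have "inj_on (map Suc) X" for X by (rule inj_onI) simp
  ultimately show "card {u. is_internal R u} = card {p. is_node (ctr R) p}" by (simp add: card_image)
  have "{u. is_leaf R u} = (\<lambda>p. map Suc p @ [0]) ` {p. is_node (ctr R) p}" using good_leaf[OF g] by blast
  moreover have "inj_on (\<lambda>p. map Suc p @ [0]) X" for X by (rule inj_onI) simp
  ultimately show "card {u. is_leaf R u} = card {p. is_node (ctr R) p}" by (simp add: card_image)
qed

lemma card_nodes_pos: "card {p. is_node t p} \<ge> 1"
proof -
  have "[] \<in> {p. is_node t p}" by simp
  then show ?thesis using finite_nodes[of t] by (metis One_nat_def Suc_leI card_gt_0_iff empty_iff)
qed

theorem proposition4p2:
  fixes n :: nat
  assumes "n \<ge> 1"
  shows "(\<forall>R l. card {u. is_internal R u} = n + 1 \<and> card {f. is_leaf R f} = n + 1 \<and>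
             first_child_leaf R \<longrightarrow> (decorated R l \<longleftrightarrow> sticky (ctr R) (ctr_lab R l)))
         \<and> bij_betw (\<lambda>(R, l). (ctr R, ctr_lab R l)) (RS n) (SS n)"
proof (intro conjI allI impI)
  fix R l assume h: "card {u. is_internal R u} = n + 1 \<and> card {f. is_leaf R f} = n + 1 \<and> first_child_leaf R"
  then have "good R" using good_of_card[of R n] by simp
  then show "decorated R l \<longleftrightarrow> sticky (ctr R) (ctr_lab R l)" by (rule main_equiv)
next
  have RSg: "good R" if "(R, l) \<in> RS n" for R l
    using that good_of_card[of R n] unfolding RS_def by simp
  show "bij_betw (\<lambda>(R, l). (ctr R, ctr_lab R l)) (RS n) (SS n)"
    unfolding bij_betw_def
  proof (intro conjI)
    show "inj_on (\<lambda>(R, l). (ctr R, ctr_lab R l)) (RS n)"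
    proof (rule inj_onI, clarsimp)
      fix R1 l1 R2 l2
      assume r1: "(R1, l1) \<in> RS n" and r2: "(R2, l2) \<in> RS n" and c: "ctr R1 = ctr R2"
        and cl: "ctr_lab R1 l1 = ctr_lab R2 l2"
      have g1: "good R1" and g2: "good R2" using RSg r1 r2 by auto
      have R: "R1 = R2"
        by (rule tree_ext) (simp add: good_nodes[OF g1] good_nodes[OF g2] c)
      have "l1 q = l2 q" for q
      proof (cases "is_leaf R1 q")
        case True
        then obtain p where p: "is_node (ctr R1) p" "q = map Suc p @ [0]" using good_leaf[OF g1] by blast
        have "ctr_lab R1 l1 p = ctr_lab R2 l2 p" using cl by simp
        then show ?thesis using p R unfolding ctr_lab_def by simp
      next
        case False
        then show ?thesis using r1 r2 R unfolding RS_def by simp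
      qed
      then show "R1 = R2 \<and> l1 = l2" using R by auto
    qed
  next
    show "(\<lambda>(R, l). (ctr R, ctr_lab R l)) ` RS n = SS n"
    proof
      show "(\<lambda>(R, l). (ctr R, ctr_lab R l)) ` RS n \<subseteq> SS n"
      proof clarify
        fix R l assume r: "(R, l) \<in> RS n"
        have g: "good R" using RSg r .
        have "card {p. is_node (ctr R) p} = n + 1" using card_good(1)[OF g] r unfolding RS_def by simp
        then have "num_edges (ctr R) = n" unfolding num_edges_def nodes_def by simp
        moreover have "sticky (ctr R) (ctr_lab R l)" using main_equiv[OF g] r unfolding RS_def by simp
        ultimately show "(ctr R, ctr_lab R l) \<in> SS n" unfolding SS_def ctr_lab_def by simp
      qed
    next
      show "SS n \<subseteq> (\<lambda>(R, l). (ctr R, ctr_lab R l)) ` RS n"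
      proof clarify
        fix S L assume s: "(S, L) \<in> SS n"
        define R where "R = ex S"
        define l where "l = (\<lambda>q. if is_leaf R q then L (map (\<lambda>x. x - 1) (butlast q)) - 1 else 0)"
        have g: "good R" unfolding R_def by (rule good_ex)
        have cR: "ctr R = S" unfolding R_def by (rule ctr_ex)
        have mm: "map (\<lambda>x. x - 1) (map Suc p) = p" for p :: "nat list" by (induction p) auto
        have cl: "ctr_lab R l = L"
        proof
          fix p show "ctr_lab R l p = L p"
          proof (cases "is_node S p")
            case True
            then have "is_leaf R (map Suc p @ [0])" using good_leaf[OF g] cR by blast
            then show ?thesis using True cR mm unfolding ctr_lab_def l_def by simp
          next
            case False
            then show ?thesis using s cR unfolding ctr_lab_def SS_def by simp
          qed
        qed
        have cn: "card {p. is_node S p} = n + 1"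
        proof -
          have "card {p. is_node S p} - 1 = n" using s unfolding SS_def num_edges_def nodes_def by simp
          then show ?thesis using card_nodes_pos[of S] by linarith
        qed
        have "(R, l) \<in> RS n"
          unfolding RS_def using card_good[OF g] cn cR g main_equiv[OF g, of l] cl s
          unfolding good_def SS_def l_def by auto
        then show "(S, L) \<in> (\<lambda>(R, l). (ctr R, ctr_lab R l)) ` RS n"
          using cR cl by (intro image_eqI[of _ _ "(R, l)"]) auto
      qed
    qed
  qed
qed


end
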